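(* Let $\mathcal{H}$ be a finite-dimensional Hilbert space, $\{\rho_\theta;\theta\in\Theta\subset\mathbb{R}^d\}$ a smooth family of density operators, $\theta_0\in\Theta$ with $\rho=\rho_{\theta_0}$ strictly positive, and suppose there exists a $(d+1)$-dimensional real subspace $\tilde{\mathcal{T}}$ of Hermitian operators with $\operatorname{span}_{\mathbb{R}}\{L_i^{(S)}\}_{i=1}^d\subset\tilde{\mathcal{T}}$ and $\mathcal{D}_\rho(\tilde{\mathcal{T}})\subset\tilde{\mathcal{T}}$. Let $G$ be a $d\times d$ real positive matrix and define $$\hat\beta=\begin{cases}\dfrac{\operatorname{Tr}\big|\sqrt G\,\operatorname{Im}(J^{(R)}_{\theta_0})^{-1}\sqrt G\big|}{2\operatorname{Tr}G\{(J^{(S)}_{\theta_0})^{-1}-\operatorname{Re}((J^{(R)}_{\theta_0})^{-1})\}}&\text{if }(J^{(S)}_{\theta_0})^{-1}\ne\operatorname{Re}((J^{(R)}_{\theta_0})^{-1}),\\ \infty&\text{otherwise.}\end{cases}$$ Then $$\max_{0\le\beta\le1}C^{(\beta)}_{\theta_0,G}=\begin{cases}C^{(1)}_{\theta_0,G}&\text{if }\hat\beta\ge1,\\ C^{(\hat\beta)}_{\theta_0,G}&\text{otherwise.}\end{cases}$$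
   Context: $\partial_i\rho=\frac{\partial}{\partial\theta^i}\rho_\theta|_{\theta=\theta_0}$. Commutation operator: $\mathcal{D}_\rho(X)\rho+\rho\mathcal{D}_\rho(X)=\sqrt{-1}(X\rho-\rho X)$. For $\beta\in[0,1]$, the $\beta$ logarithmic derivatives $L_i^{(\beta)}$ are defined by $\partial_i\rho=\frac{1+\beta}{2}\rho L_i^{(\beta)}+\frac{1-\beta}{2}L_i^{(\beta)}\rho$; $L_i^{(S)}=L_i^{(0)}$ (SLD, assumed linearly independent), $L_i^{(R)}=L_i^{(1)}$ (RLD). $J^{(\beta)}_{\theta_0}=[\operatorname{Tr}\partial_i\rho\,L_j^{(\beta)}]_{ij}$, $J^{(S)}_{\theta_0}=J^{(0)}_{\theta_0}$, $J^{(R)}_{\theta_0}=J^{(1)}_{\theta_0}$, and $C^{(\beta)}_{\theta_0,G}=\operatorname{Tr}G(J^{(\beta)}_{\theta_0})^{-1}+\operatorname{Tr}|\sqrt G\,\operatorname{Im}(J^{(\beta)}_{\theta_0})^{-1}\sqrt G|$. Re, Im entrywise; $|X|=(X^*X)^{1/2}$. *)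

theory Defs
  imports "HOL-Analysis.Analysis"
begin

definition cstar :: "complex^'n^'n \<Rightarrow> complex^'n^'n" where
  "cstar A = (\<chi> i j. cnj (A $ j $ i))"

definition hermitian :: "complex^'n^'n \<Rightarrow> bool" where
  "hermitian A \<longleftrightarrow> cstar A = A"

definition cinner :: "complex^'n \<Rightarrow> complex^'n \<Rightarrow> complex" where
  "cinner v w = (\<Sum>i\<in>UNIV. cnj (v $ i) * w $ i)"

definition density_op :: "complex^'n^'n \<Rightarrow> bool" where
  "density_op A \<longleftrightarrow> hermitian A \<and> (\<forall>v. 0 \<le> Re (cinner v (A *v v))) \<and> trace A = 1"

definition strictly_pos :: "complex^'n^'n \<Rightarrow> bool" where
  "strictly_pos A \<longleftrightarrow> hermitian A \<and> (\<forall>v. v \<noteq> 0 \<longrightarrow> 0 < Re (cinner v (A *v v)))"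

definition partial :: "'d::finite \<Rightarrow> (real^'d \<Rightarrow> 'a::real_normed_vector) \<Rightarrow> real^'d \<Rightarrow> 'a" where
  "partial i f x = vector_derivative (\<lambda>t. f (x + t *\<^sub>R axis i 1)) (at 0)"

definition smooth_on :: "(real^'d::finite \<Rightarrow> 'a::real_normed_vector) \<Rightarrow> (real^'d) set \<Rightarrow> bool" where
  "smooth_on f S \<longleftrightarrow> (\<forall>is::'d list.
      continuous_on S (foldr partial is f) \<and>
      (\<forall>i. \<forall>x\<in>S. (\<lambda>t. foldr partial is f (x + t *\<^sub>R axis i 1)) differentiable (at 0)))"

definition logder :: "real \<Rightarrow> complex^'n^'n \<Rightarrow> complex^'n^'n \<Rightarrow> complex^'n^'n" where
  "logder \<beta> \<rho> D = (THE L. D = ((1 + \<beta>) / 2) *\<^sub>R (\<rho> ** L) + ((1 - \<beta>) / 2) *\<^sub>R (L ** \<rho>))"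

definition commop :: "complex^'n^'n \<Rightarrow> complex^'n^'n \<Rightarrow> complex^'n^'n" where
  "commop \<rho> X = (THE Y. Y ** \<rho> + \<rho> ** Y = map_matrix (\<lambda>z. \<i> * z) (X ** \<rho> - \<rho> ** X))"

definition Jmat :: "real \<Rightarrow> complex^'n^'n \<Rightarrow> ('d::finite \<Rightarrow> complex^'n^'n) \<Rightarrow> complex^'d^'d" where
  "Jmat \<beta> \<rho> dr = (\<chi> i j. trace (dr i ** logder \<beta> \<rho> (dr j)))"

definition Re_mat :: "complex^'d^'d \<Rightarrow> real^'d^'d" where
  "Re_mat A = (\<chi> i j. Re (A $ i $ j))"

definition Im_mat :: "complex^'d^'d \<Rightarrow> real^'d^'d" where
  "Im_mat A = (\<chi> i j. Im (A $ i $ j))"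

definition rpsd :: "real^'d^'d \<Rightarrow> bool" where
  "rpsd A \<longleftrightarrow> transpose A = A \<and> (\<forall>v. 0 \<le> v \<bullet> (A *v v))"

definition rposdef :: "real^'d^'d \<Rightarrow> bool" where
  "rposdef A \<longleftrightarrow> transpose A = A \<and> (\<forall>v. v \<noteq> 0 \<longrightarrow> 0 < v \<bullet> (A *v v))"

definition msqrt :: "real^'d^'d \<Rightarrow> real^'d^'d" where
  "msqrt A = (THE S. rpsd S \<and> S ** S = A)"

definition mabs :: "real^'d^'d \<Rightarrow> real^'d^'d" where
  "mabs X = msqrt (transpose X ** X)"

text \<open>C^(beta)_{theta_0,G} = Tr G (J^(beta))^{-1} + Tr |sqrt G Im (J^(beta))^{-1} sqrt G|.
  The first trace is real (J^(beta) is Hermitian); its real part is taken to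
  obtain a real-valued quantity.\<close>
definition Cbound :: "real \<Rightarrow> complex^'n^'n \<Rightarrow> ('d::finite \<Rightarrow> complex^'n^'n) \<Rightarrow> real^'d^'d \<Rightarrow> real" where
  "Cbound \<beta> \<rho> dr G =
     Re (trace ((map_matrix complex_of_real G) ** matrix_inv (Jmat \<beta> \<rho> dr)))
     + trace (mabs (msqrt G ** Im_mat (matrix_inv (Jmat \<beta> \<rho> dr)) ** msqrt G))"

end

theory Submission
  imports Defs
begin
lemma sym_dot:
  fixes A :: "real^'d^'d"
  assumes "transpose A = A"
  shows "x \<bullet> (A *v y) = (A *v x) \<bullet> y"
proof -
  have "x \<bullet> (A *v y) = (\<Sum>i\<in>UNIV. \<Sum>j\<in>UNIV. x$i * A$i$j * y$j)"
    by (simp add: inner_vec_def matrix_vector_mult_def sum_distrib_left mult.assoc)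
  also have "\<dots> = (\<Sum>j\<in>UNIV. \<Sum>i\<in>UNIV. x$i * A$i$j * y$j)" by (rule sum.swap)
  also have "\<dots> = (A *v x) \<bullet> y"
  proof -
    have "\<And>i j. A$i$j = A$j$i" using assms by (metis transpose_def vec_lambda_beta)
    then have "\<And>j. (\<Sum>i\<in>UNIV. x$i * A$i$j * y$j) = (\<Sum>i\<in>UNIV. A$j$i * x$i) * y$j"
      by (auto simp: sum_distrib_left sum_distrib_right mult_ac intro!: sum.cong)
    then show ?thesis
      by (simp add: inner_vec_def matrix_vector_mult_def)
  qed
  finally show ?thesis .
qed

lemma quad_zero:
  fixes a b :: real
  assumes "\<forall>t. 0 \<le> a * t + b * t^2"
  shows "a = 0"
proof (rule ccontr)
  assume a: "a \<noteq> 0"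
  define c where "c = \<bar>b\<bar> + 1"
  have c: "c > 0" "b \<le> c - 1" unfolding c_def by auto
  define t where "t = - a / (2 * c)"
  have "a * t + b * t^2 = a^2 * (b / (4 * c^2) - 1 / (2*c))"
    unfolding t_def using c by (simp add: field_simps power2_eq_square)
  also have "b / (4 * c^2) - 1 / (2*c) = (b - 2*c) / (4*c^2)"
    using c by (simp add: field_simps power2_eq_square)
  also have "a^2 * ((b - 2*c) / (4*c^2)) < 0"
    using a c by (intro mult_pos_neg divide_neg_pos) auto
  finally show False using assms by (metis not_le)
qed

lemma psd_form_zero:
  fixes P :: "real^'d^'d"
  assumes "rpsd P" "x \<bullet> (P *v x) = 0"
  shows "P *v x = 0"
proof -
  have s: "transpose P = P" and p: "\<And>v. 0 \<le> v \<bullet> (P *v v)" using assms(1) by (auto simp: rpsd_def)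
  let ?y = "P *v x"
  have "\<forall>t. 0 \<le> (2 * (?y \<bullet> (P *v x))) * t + (?y \<bullet> (P *v ?y)) * t^2"
  proof
    fix t :: real
    have "0 \<le> (x + t *\<^sub>R ?y) \<bullet> (P *v (x + t *\<^sub>R ?y))" by (rule p)
    also have "\<dots> = x \<bullet> (P *v x) + t * (x \<bullet> (P *v ?y)) + t * (?y \<bullet> (P *v x)) + t^2 * (?y \<bullet> (P *v ?y))"
      by (simp add: matrix_vector_right_distrib matrix_vector_mult_scaleR inner_add_left inner_add_right power2_eq_square algebra_simps)
    also have "x \<bullet> (P *v ?y) = ?y \<bullet> (P *v x)" using sym_dot[OF s] by (simp add: inner_commute)
    finally show "0 \<le> (2 * (?y \<bullet> (P *v x))) * t + (?y \<bullet> (P *v ?y)) * t^2"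
      using assms(2) by (simp add: algebra_simps)
  qed
  from quad_zero[OF this] show ?thesis by simp
qed

lemma mm_add_r: "((A::'a::semiring_1^'m^'n) + B) ** C = A ** C + B ** C"
  by (simp add: matrix_matrix_mult_def vec_eq_iff sum.distrib distrib_right)
lemma mm_diff_r: "((A::'a::ring_1^'m^'n) - B) ** C = A ** C - B ** C"
  by (simp add: matrix_matrix_mult_def vec_eq_iff sum_subtractf left_diff_distrib)
lemma mm_diff_l: "(C::'a::ring_1^'m^'n) ** (A - B) = C ** A - C ** B"
  by (simp add: matrix_matrix_mult_def vec_eq_iff sum_subtractf right_diff_distrib)
lemma mm_neg_l: "(- (A::'a::ring_1^'m^'n)) ** B = - (A ** B)"
  by (simp add: matrix_matrix_mult_def vec_eq_iff sum_negf)
lemma mm_neg_r: "(A::'a::ring_1^'m^'n) ** (- B) = - (A ** B)"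
  by (simp add: matrix_matrix_mult_def vec_eq_iff sum_negf)

lemma rpsd_sym: "rpsd P \<Longrightarrow> transpose P = P" by (simp add: rpsd_def)
lemma rpsd_nonneg: "rpsd P \<Longrightarrow> 0 \<le> v \<bullet> (P *v v)" by (simp add: rpsd_def)

lemma sym_entry: "transpose (A::'a^'d^'d) = A \<Longrightarrow> A$i$j = A$j$i"
  by (metis transpose_def vec_lambda_beta)

lemma trace_UPU:
  fixes U P :: "real^'d^'d"
  assumes "transpose U = U"
  shows "trace (U ** P ** U) = (\<Sum>i\<in>UNIV. (U$i) \<bullet> (P *v (U$i)))"
proof -
  have "\<And>i. (U ** P ** U)$i$i = (U$i) \<bullet> (P *v (U$i))"
    using sym_entry[OF assms]
    by (simp add: matrix_matrix_mult_def inner_vec_def matrix_vector_mult_def sum_distrib_left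
        sum_distrib_right mult_ac) (subst sum.swap, simp add: mult_ac)
  then show ?thesis by (simp add: trace_def)
qed

lemma msqrt_unique:
  fixes S T :: "real^'d^'d"
  assumes S: "rpsd S" and T: "rpsd T" and eq: "S ** S = T ** T"
  shows "S = T"
proof -
  define U where "U = S - T"
  define P where "P = S + T"
  have Usym: "transpose U = U" using S T by (simp add: U_def rpsd_def transpose_def vec_eq_iff)
  have Psd: "rpsd P" using S T
    by (auto simp: P_def rpsd_def transpose_def vec_eq_iff matrix_vector_mult_add_rdistrib inner_add_right)
  have PU: "P ** U + U ** P = 0"
    using eq by (simp add: P_def U_def matrix_add_ldistrib mm_add_r mm_diff_l mm_diff_r algebra_simps)
  have "U ** P ** U = - (U ** U ** P)"
  proof -
    have "U ** (P ** U + U ** P) = 0" using PU by simp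
    then have "U ** P ** U + U ** U ** P = 0"
      by (simp add: matrix_add_ldistrib matrix_mul_assoc)
    then show ?thesis by (simp add: eq_neg_iff_add_eq_0)
  qed
  moreover have "trace (U ** U ** P) = trace (U ** P ** U)"
    by (metis matrix_mul_assoc trace_mul_sym)
  ultimately have "trace (U ** P ** U) = 0"
    by (simp add: trace_def sum_negf)
  then have s0: "(\<Sum>i\<in>UNIV. (U$i) \<bullet> (P *v (U$i))) = 0" using trace_UPU[OF Usym] by simp
  have "\<forall>i\<in>UNIV. (U$i) \<bullet> (P *v (U$i)) = 0"
    using sum_nonneg_eq_0_iff[of UNIV "\<lambda>i. (U$i) \<bullet> (P *v (U$i))"] s0 rpsd_nonneg[OF Psd] by auto
  then have Pc: "\<And>i. P *v (U$i) = 0" using psd_form_zero[OF Psd] by auto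
  have PU0: "P ** U = 0"
  proof -
    have "\<And>k i. (P ** U)$k$i = (P *v (U$i))$k"
      using sym_entry[OF Usym] by (simp add: matrix_matrix_mult_def matrix_vector_mult_def)
    then show ?thesis using Pc by (simp add: vec_eq_iff)
  qed
  have "U *v x = 0" for x
  proof -
    let ?y = "U *v x"
    have "P *v ?y = 0" using PU0 by (simp add: matrix_vector_mul_assoc)
    then have "?y \<bullet> (S *v ?y + T *v ?y) = 0"
      by (simp add: P_def matrix_vector_mult_add_rdistrib)
    then have "?y \<bullet> (S *v ?y) + ?y \<bullet> (T *v ?y) = 0"
      by (simp only: inner_add_right)
    then have "?y \<bullet> (S *v ?y) = 0" "?y \<bullet> (T *v ?y) = 0"
      using rpsd_nonneg[OF S, of ?y] rpsd_nonneg[OF T, of ?y] by linarith+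
    then have "S *v ?y = 0" "T *v ?y = 0" using psd_form_zero S T by blast+
    then have "U *v ?y = 0" by (simp add: U_def matrix_vector_mult_diff_rdistrib)
    then have "?y \<bullet> ?y = 0" using sym_dot[OF Usym, of x ?y] by simp
    then show ?thesis by simp
  qed
  then have "U = 0" by (simp add: matrix_eq)
  then show ?thesis by (simp add: U_def)
qed

lemma eigen_exists:
  fixes A :: "real^'d^'d"
  assumes A: "rpsd A" and V: "subspace V" and inv: "\<forall>x\<in>V. A *v x \<in> V" and nz: "V \<noteq> {0}"
  shows "\<exists>x\<in>V. norm x = 1 \<and> A *v x = (x \<bullet> (A *v x)) *\<^sub>R x"
proof -
  have As: "transpose A = A" using A by (simp add: rpsd_def)
  define K where "K = sphere (0::real^'d) 1 \<inter> V"
  have cK: "compact K" unfolding K_def by (intro compact_Int_closed compact_sphere closed_subspace V)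
  obtain y where y: "y \<in> V" "y \<noteq> 0" using nz V subspace_0 by blast
  have "y /\<^sub>R norm y \<in> K" using y V unfolding K_def by (simp add: subspace_scale)
  then have neK: "K \<noteq> {}" by blast
  have cf: "continuous_on K (\<lambda>x. x \<bullet> (A *v x))"
    by (intro continuous_on_inner continuous_on_id matrix_vector_mult_linear_continuous_on)
  obtain x where xK: "x \<in> K" and xmax: "\<And>z. z \<in> K \<Longrightarrow> z \<bullet> (A *v z) \<le> x \<bullet> (A *v x)"
    using continuous_attains_sup[OF cK neK cf] by blast
  have xV: "x \<in> V" and nx: "norm x = 1" using xK by (auto simp: K_def)
  have xx: "x \<bullet> x = 1" using nx by (simp add: dot_square_norm)
  define l where "l = x \<bullet> (A *v x)"
  define y where "y = A *v x - l *\<^sub>R x"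
  have xy: "x \<bullet> y = 0" by (simp add: y_def l_def inner_diff_right xx)
  have bound: "z \<bullet> (A *v z) \<le> l * (z \<bullet> z)" if zV: "z \<in> V" for z
  proof (cases "z = 0")
    case True then show ?thesis by simp
  next
    case False
    let ?w = "z /\<^sub>R norm z"
    have "?w \<in> K" using zV False V unfolding K_def by (simp add: subspace_scale)
    then have "?w \<bullet> (A *v ?w) \<le> l" using xmax l_def by blast
    moreover have "?w \<bullet> (A *v ?w) = (z \<bullet> (A *v z)) / (norm z)^2"
      using False by (simp add: matrix_vector_mult_scaleR power2_eq_square field_simps)
    moreover have "z \<bullet> z = (norm z)^2" by (simp add: dot_square_norm)
    ultimately show ?thesis using False by (simp add: divide_le_eq mult.commute)
  qed
  have yV: "y \<in> V" unfolding y_def using inv xV V by (simp add: subspace_diff subspace_scale)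
  have sy: "x \<bullet> (A *v y) = y \<bullet> (A *v x)" using sym_dot[OF As] by (simp add: inner_commute)
  have "\<forall>t. 0 \<le> (- 2 * (y \<bullet> (A *v x))) * t + (l * (y \<bullet> y) - y \<bullet> (A *v y)) * t^2"
  proof
    fix t :: real
    have f1: "(x + t *\<^sub>R y) \<bullet> (A *v (x + t *\<^sub>R y)) \<le> l * ((x + t *\<^sub>R y) \<bullet> (x + t *\<^sub>R y))"
      using bound V xV yV by (simp add: subspace_add subspace_scale)
    have f2: "(x + t *\<^sub>R y) \<bullet> (A *v (x + t *\<^sub>R y)) = l + 2 * t * (y \<bullet> (A *v x)) + t^2 * (y \<bullet> (A *v y))"
      using sy by (simp add: l_def matrix_vector_right_distrib matrix_vector_mult_scaleR inner_add_left inner_add_right power2_eq_square algebra_simps)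
    have f3: "(x + t *\<^sub>R y) \<bullet> (x + t *\<^sub>R y) = 1 + t^2 * (y \<bullet> y)"
      using xx xy by (simp add: inner_add_left inner_add_right power2_eq_square inner_commute)
    have "l + 2 * t * (y \<bullet> (A *v x)) + t^2 * (y \<bullet> (A *v y)) \<le> l * (1 + t^2 * (y \<bullet> y))"
      using f1 unfolding f2 f3 .
    then show "0 \<le> (- 2 * (y \<bullet> (A *v x))) * t + (l * (y \<bullet> y) - y \<bullet> (A *v y)) * t^2"
      by (simp add: algebra_simps)
  qed
  from quad_zero[OF this] have "y \<bullet> (A *v x) = 0" by simp
  then have "y \<bullet> y = 0" using xy by (simp add: y_def inner_diff_right inner_commute)
  then have "y = 0" by simp
  then show ?thesis using xV nx by (auto simp: y_def l_def)
qed

lemma outer_mult: "(\<chi> i j. x$i * x$j) *v w = (x \<bullet> (w::real^'d)) *\<^sub>R x"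
  by (simp add: matrix_vector_mult_def inner_vec_def vec_eq_iff sum_distrib_left mult_ac)

lemma scaleR_mv: "(c *\<^sub>R (A::real^'d^'e)) *v v = c *\<^sub>R (A *v v)"
  by (simp add: matrix_vector_mult_def vec_eq_iff sum_distrib_left mult_ac)

lemma sqrt_ex_sub:
  fixes A :: "real^'d^'d"
  assumes A: "rpsd A"
  shows "subspace V \<Longrightarrow> (\<forall>x\<in>V. A *v x \<in> V) \<Longrightarrow> dim V = n \<Longrightarrow>
    \<exists>S. rpsd S \<and> (\<forall>x. S *v x \<in> V) \<and> (\<forall>x. (\<forall>w\<in>V. x \<bullet> w = 0) \<longrightarrow> S *v x = 0)
       \<and> (\<forall>x\<in>V. S *v (S *v x) = A *v x)"
proof (induction n arbitrary: V rule: less_induct)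
  case (less n V)
  have As: "transpose A = A" using A by (simp add: rpsd_def)
  show ?case
  proof (cases "V = {0}")
    case True
    have "rpsd (0::real^'d^'d)" by (simp add: rpsd_def transpose_def vec_eq_iff)
    then show ?thesis using True by (intro exI[of _ 0]) auto
  next
    case False
    obtain x where xV: "x \<in> V" and nx: "norm x = 1" and ev: "A *v x = (x \<bullet> (A *v x)) *\<^sub>R x"
      using eigen_exists[OF A less.prems(1) less.prems(2) False] by blast
    define l where "l = x \<bullet> (A *v x)"
    have l0: "0 \<le> l" using A by (simp add: l_def rpsd_def)
    have xx: "x \<bullet> x = 1" using nx by (simp add: dot_square_norm)
    define V' where "V' = {w\<in>V. x \<bullet> w = 0}"
    have sV': "subspace V'" using less.prems(1)
      by (auto simp: V'_def subspace_def inner_add_right)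
    have iV': "\<forall>w\<in>V'. A *v w \<in> V'"
    proof
      fix w assume w: "w \<in> V'"
      have "x \<bullet> (A *v w) = (A *v x) \<bullet> w" by (rule sym_dot[OF As])
      also have "\<dots> = 0" using w ev by (simp add: V'_def l_def[symmetric])
      finally show "A *v w \<in> V'" using w less.prems(2) by (simp add: V'_def)
    qed
    have "span V' \<subset> span V"
    proof -
      have "V' \<subseteq> V" by (auto simp: V'_def)
      moreover have "x \<notin> V'" using xx by (simp add: V'_def)
      ultimately have "V' \<subset> V" using xV by auto
      moreover have e1: "span V' = V'" and e2: "span V = V" using sV' less.prems(1) span_eq_iff by blast+
      ultimately show ?thesis by (simp only: e1 e2)
    qed
    then have "dim V' < n" using dim_psubset less.prems(3) by blast
    from less.IH[OF this sV' iV' refl] obtain S' where S': "rpsd S'" "\<forall>z. S' *v z \<in> V'"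
      "\<forall>z. (\<forall>w\<in>V'. z \<bullet> w = 0) \<longrightarrow> S' *v z = 0" "\<forall>z\<in>V'. S' *v (S' *v z) = A *v z" by blast
    define Ox where "Ox = ((\<chi> i j. x$i * x$j) :: real^'d^'d)"
    define S where "S = S' + sqrt l *\<^sub>R Ox"
    have Sv: "S *v z = S' *v z + (sqrt l * (x \<bullet> z)) *\<^sub>R x" for z
      by (simp add: S_def Ox_def matrix_vector_mult_add_rdistrib outer_mult scaleR_mv)
    have S'sym: "transpose S' = S'" using S' by (simp add: rpsd_def)
    have "rpsd S"
    proof -
      have e: "\<And>i j. S'$i$j = S'$j$i" by (rule sym_entry[OF S'sym])
      have "transpose S = S"
        by (simp add: S_def Ox_def transpose_def vec_eq_iff mult.commute e)
      moreover have "0 \<le> z \<bullet> (S *v z)" for z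
      proof -
        have "z \<bullet> (S *v z) = z \<bullet> (S' *v z) + sqrt l * (x \<bullet> z)^2"
          by (simp add: Sv inner_add_right power2_eq_square inner_commute)
        then show ?thesis using S'(1) l0 by (simp add: rpsd_def)
      qed
      ultimately show ?thesis by (simp add: rpsd_def)
    qed
    moreover have "\<forall>z. S *v z \<in> V"
    proof
      fix z
      have "S' *v z \<in> V" using S'(2) by (auto simp: V'_def)
      then show "S *v z \<in> V" using Sv xV less.prems(1) by (simp add: subspace_add subspace_scale)
    qed
    moreover have "\<forall>z. (\<forall>w\<in>V. z \<bullet> w = 0) \<longrightarrow> S *v z = 0"
    proof (intro allI impI)
      fix z assume z: "\<forall>w\<in>V. z \<bullet> w = 0"
      then have "S' *v z = 0" using S'(3) by (auto simp: V'_def)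
      moreover have "x \<bullet> z = 0" using z xV by (simp add: inner_commute)
      ultimately show "S *v z = 0" by (simp add: Sv)
    qed
    moreover have "\<forall>z\<in>V. S *v (S *v z) = A *v z"
    proof
      fix z assume zV: "z \<in> V"
      define p where "p = z - (x \<bullet> z) *\<^sub>R x"
      have pV: "p \<in> V'" using zV xV less.prems(1) xx
        by (simp add: p_def V'_def subspace_diff subspace_scale inner_diff_right)
      have S'x: "S' *v x = 0" using S'(3) by (auto simp: V'_def inner_commute)
      have Sx: "S *v x = sqrt l *\<^sub>R x" using S'x xx by (simp add: Sv)
      have SSx: "S *v (S *v x) = A *v x" using Sx l0 ev
        by (simp add: matrix_vector_mult_scaleR l_def[symmetric])
      have Sp: "S *v p = S' *v p" using pV by (simp add: Sv V'_def)
      have S'pV: "S' *v p \<in> V'" using S'(2) by blast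
      have SSp: "S *v (S *v p) = A *v p" using Sp S'pV S'(4) pV by (simp add: Sv V'_def)
      have zz: "p + (x \<bullet> z) *\<^sub>R x = z" by (simp add: p_def)
      have "S *v (S *v z) = S *v (S *v (p + (x \<bullet> z) *\<^sub>R x))" by (simp only: zz)
      also have "\<dots> = S *v (S *v p) + (x \<bullet> z) *\<^sub>R (S *v (S *v x))"
        by (simp only: matrix_vector_right_distrib matrix_vector_mult_scaleR)
      also have "\<dots> = A *v p + (x \<bullet> z) *\<^sub>R (A *v x)" using SSp SSx by simp
      also have "\<dots> = A *v (p + (x \<bullet> z) *\<^sub>R x)" by (simp only: matrix_vector_right_distrib matrix_vector_mult_scaleR)
      also have "\<dots> = A *v z" by (simp only: zz)
      finally show "S *v (S *v z) = A *v z" .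
    qed
    ultimately show ?thesis by blast
  qed
qed

lemma msqrt_ex:
  fixes A :: "real^'d^'d"
  assumes A: "rpsd A"
  shows "\<exists>S. rpsd S \<and> S ** S = A"
proof -
  obtain S where S: "rpsd S" "\<forall>x. S *v (S *v x) = A *v x"
    using sqrt_ex_sub[OF A, of UNIV "dim (UNIV::(real^'d) set)"] subspace_UNIV by auto
  then have "S ** S = A" by (simp add: matrix_eq matrix_vector_mul_assoc[symmetric])
  then show ?thesis using S by blast
qed

lemma msqrt_prop:
  fixes A :: "real^'d^'d"
  assumes A: "rpsd A"
  shows "rpsd (msqrt A) \<and> msqrt A ** msqrt A = A"
proof -
  have "\<exists>!S. rpsd S \<and> S ** S = A" using msqrt_ex[OF A] msqrt_unique by blast
  then show ?thesis unfolding msqrt_def by (rule theI')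
qed

lemma msqrt_eqI:
  fixes A S :: "real^'d^'d"
  assumes "rpsd S" "S ** S = A"
  shows "msqrt A = S"
  unfolding msqrt_def using assms msqrt_unique by blast

lemma rpsd_scale: "rpsd (S::real^'d^'d) \<Longrightarrow> 0 \<le> c \<Longrightarrow> rpsd (c *\<^sub>R S)"
  by (auto simp: rpsd_def transpose_def vec_eq_iff scaleR_mv)

lemma mm_scaleR_l: "(c *\<^sub>R (A::real^'m^'n)) ** B = c *\<^sub>R (A ** B)"
  by (simp add: matrix_matrix_mult_def vec_eq_iff sum_distrib_left mult_ac)
lemma mm_scaleR_r: "(A::real^'m^'n) ** (c *\<^sub>R B) = c *\<^sub>R (A ** B)"
  by (simp add: matrix_matrix_mult_def vec_eq_iff sum_distrib_left mult_ac)

lemma msqrt_scale: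
  fixes A :: "real^'d^'d"
  assumes A: "rpsd A" and c: "0 \<le> c"
  shows "msqrt (c^2 *\<^sub>R A) = c *\<^sub>R msqrt A"
proof (rule msqrt_eqI)
  show "rpsd (c *\<^sub>R msqrt A)" using msqrt_prop[OF A] c rpsd_scale by blast
  show "c *\<^sub>R msqrt A ** c *\<^sub>R msqrt A = c\<^sup>2 *\<^sub>R A"
    using msqrt_prop[OF A] by (simp add: mm_scaleR_l mm_scaleR_r power2_eq_square)
qed

lemma trace_rpsd_nonneg:
  fixes S :: "real^'d^'d"
  assumes "rpsd S"
  shows "0 \<le> trace S"
proof -
  have "\<And>i. S$i$i = axis i 1 \<bullet> (S *v axis i 1)"
    by (simp add: matrix_vector_mult_basis column_def inner_axis inner_commute[of "axis _ _"])
  then have "\<And>i. 0 \<le> S$i$i" using assms by (simp add: rpsd_def)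
  then show ?thesis by (simp add: trace_def sum_nonneg)
qed

lemma trace_scaleR: "trace (c *\<^sub>R (S::real^'d^'d)) = c * trace S"
  by (simp add: trace_def sum_distrib_left)

lemma transpose_dot: "v \<bullet> (transpose X *v w) = (X *v v) \<bullet> (w::real^'d)"
  by (simp add: inner_vec_def matrix_vector_mult_def transpose_def sum_distrib_left sum_distrib_right mult_ac)
     (rule sum.swap)

lemma rpsd_gram: "rpsd (transpose X ** (X::real^'d^'e))"
proof -
  have "transpose (transpose X ** X) = transpose X ** X"
    by (simp add: matrix_transpose_mul transpose_transpose)
  moreover have "0 \<le> v \<bullet> ((transpose X ** X) *v v)" for v
  proof -
    have "v \<bullet> ((transpose X ** X) *v v) = v \<bullet> (transpose X *v (X *v v))"
      by (simp only: matrix_vector_mul_assoc)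
    also have "\<dots> = (X *v v) \<bullet> (X *v v)" by (rule transpose_dot)
    finally show ?thesis by simp
  qed
  ultimately show ?thesis by (simp add: rpsd_def)
qed

lemma transpose_scaleR: "transpose (c *\<^sub>R (X::real^'d^'e)) = c *\<^sub>R transpose X"
  by (simp add: transpose_def vec_eq_iff)

lemma mabs_scale:
  fixes X :: "real^'d^'d"
  assumes c: "0 \<le> c"
  shows "mabs (c *\<^sub>R X) = c *\<^sub>R mabs X"
proof -
  have "transpose (c *\<^sub>R X) ** (c *\<^sub>R X) = c^2 *\<^sub>R (transpose X ** X)"
    by (simp add: transpose_scaleR mm_scaleR_l mm_scaleR_r power2_eq_square)
  then show ?thesis unfolding mabs_def using msqrt_scale[OF rpsd_gram c] by simp
qed

lemma trace_mabs_nonneg: "0 \<le> trace (mabs (X::real^'d^'d))"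
  unfolding mabs_def using msqrt_prop[OF rpsd_gram] trace_rpsd_nonneg by blast

type_synonym 'n cmat = "complex^'n^'n"

definition cm :: "complex \<Rightarrow> complex^'n^'m \<Rightarrow> complex^'n^'m" where
  "cm c X = map_matrix (\<lambda>z. c * z) X"

definition Eb :: "real \<Rightarrow> complex^'n^'n \<Rightarrow> complex^'n^'n \<Rightarrow> complex^'n^'n" where
  "Eb \<beta> \<rho> L = ((1 + \<beta>) / 2) *\<^sub>R (\<rho> ** L) + ((1 - \<beta>) / 2) *\<^sub>R (L ** \<rho>)"

lemma cm_nth[simp]: "cm c X $ i $ j = c * X $ i $ j"
  by (simp add: cm_def)

lemma cscaleR: "c *\<^sub>R (z::complex) = complex_of_real c * z" by (rule scaleR_conv_of_real)

lemma scaleR_entry: "(c *\<^sub>R (X::complex^'n^'m)) $ i $ j = complex_of_real c * X $ i $ j"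
proof -
  have "(c *\<^sub>R X) $ i $ j = c *\<^sub>R (X $ i $ j)" by simp
  also have "\<dots> = complex_of_real c * X $ i $ j" by (rule scaleR_conv_of_real)
  finally show ?thesis .
qed

lemma Re_scaleR': "Re (c *\<^sub>R (z::complex)) = c * Re z" by simp

lemma trace_scaleRc: "trace (c *\<^sub>R (X::complex^'n^'n)) = c *\<^sub>R trace X"
  by (simp add: trace_def scaleR_sum_right)

lemma scaleR_cm: "c *\<^sub>R (X::complex^'n^'m) = cm (complex_of_real c) X"
  by (simp add: vec_eq_iff cscaleR)

lemma trace_zero[simp]: "trace (0::'a::semiring_1^'n^'n) = 0"
  by (simp add: trace_def)

lemma cm_add: "cm c (X + Y) = cm c X + cm c Y" by (simp add: vec_eq_iff distrib_left)
lemma cm_diff: "cm c (X - Y) = cm c X - cm c Y" by (simp add: vec_eq_iff right_diff_distrib)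
lemma cm_add_l: "cm (c + d) X = cm c X + cm d X" by (simp add: vec_eq_iff distrib_right)
lemma cm_cm: "cm c (cm d X) = cm (c * d) X" by (simp add: vec_eq_iff)
lemma cm_one[simp]: "cm 1 X = X" by (simp add: vec_eq_iff)
lemma cm_zero[simp]: "cm 0 X = 0" "cm c 0 = 0" by (simp_all add: vec_eq_iff)
lemma cm_sum: "cm c (\<Sum>k\<in>S. f k) = (\<Sum>k\<in>S. cm c (f k))"
  by (induction S rule: infinite_finite_induct) (simp_all add: cm_add)
lemma cm_sum_l: "cm (\<Sum>k\<in>S. f k) X = (\<Sum>k\<in>S. cm (f k) X)"
  by (induction S rule: infinite_finite_induct) (simp_all add: cm_add_l)
lemma cm_neg: "cm (- c) X = - cm c X" by (simp add: vec_eq_iff)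

lemma mmc_add_r: "((A::complex^'m^'n) + B) ** C = A ** C + B ** C"
  by (simp add: matrix_matrix_mult_def vec_eq_iff sum.distrib distrib_right)
lemma mmc_add_l: "(C::complex^'m^'n) ** (A + B) = C ** A + C ** B"
  by (simp add: matrix_matrix_mult_def vec_eq_iff sum.distrib distrib_left)
lemma mmc_diff_r: "((A::complex^'m^'n) - B) ** C = A ** C - B ** C"
  by (simp add: matrix_matrix_mult_def vec_eq_iff sum_subtractf left_diff_distrib)
lemma mmc_diff_l: "(C::complex^'m^'n) ** (A - B) = C ** A - C ** B"
  by (simp add: matrix_matrix_mult_def vec_eq_iff sum_subtractf right_diff_distrib)
lemma mmc_cm_l: "cm c (A::complex^'m^'n) ** B = cm c (A ** B)"
  by (simp add: matrix_matrix_mult_def vec_eq_iff sum_distrib_left mult_ac)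
lemma mmc_cm_r: "(A::complex^'m^'n) ** cm c B = cm c (A ** B)"
  by (simp add: matrix_matrix_mult_def vec_eq_iff sum_distrib_left mult_ac)
lemma mmc_sum_r: "(A::complex^'m^'n) ** (\<Sum>k\<in>S. f k) = (\<Sum>k\<in>S. A ** f k)"
  by (induction S rule: infinite_finite_induct) (simp_all add: mmc_add_l)
lemma mmc_sum_l: "(\<Sum>k\<in>S. f k) ** (A::complex^'m^'n) = (\<Sum>k\<in>S. f k ** A)"
  by (induction S rule: infinite_finite_induct) (simp_all add: mmc_add_r)

lemma trace_cm: "trace (cm c (X::complex^'n^'n)) = c * trace X"
  by (simp add: trace_def sum_distrib_left)
lemma trace_sum: "trace (\<Sum>k\<in>S. f k) = (\<Sum>k\<in>S. trace (f k :: complex^'n^'n))"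
  by (induction S rule: infinite_finite_induct) (simp_all add: trace_add)

lemma Eb_cm: "Eb b \<rho> (cm c X) = cm c (Eb b \<rho> X)"
  by (simp add: Eb_def scaleR_cm mmc_cm_l mmc_cm_r cm_cm cm_add mult.commute)
lemma Eb_add: "Eb b \<rho> (X + Y) = Eb b \<rho> X + Eb b \<rho> Y"
  by (simp add: Eb_def mmc_add_l mmc_add_r scaleR_add_right)
lemma Eb_diff: "Eb b \<rho> (X - Y) = Eb b \<rho> X - Eb b \<rho> Y"
  by (simp add: Eb_def mmc_diff_l mmc_diff_r scaleR_diff_right)
lemma Eb_zero: "Eb b \<rho> 0 = 0" by (simp add: Eb_def)
lemma Eb_sum: "Eb b \<rho> (\<Sum>k\<in>S. f k) = (\<Sum>k\<in>S. Eb b \<rho> (f k))"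
  by (induction S rule: infinite_finite_induct) (simp_all add: Eb_add Eb_zero)
lemma Eb_scaleR: "Eb b \<rho> (c *\<^sub>R X) = c *\<^sub>R Eb b \<rho> X"
  by (simp add: scaleR_cm Eb_cm)
lemma linear_Eb: "linear (Eb b \<rho>)"
  by (intro linearI) (simp_all add: Eb_add Eb_scaleR)

lemma trace_form1:
  "trace (cstar L ** \<rho> ** L) = (\<Sum>j\<in>UNIV. cinner (\<chi> i. L$i$j) (\<rho> *v (\<chi> i. L$i$j)))"
proof -
  have "\<And>j. (cstar L ** \<rho> ** L)$j$j = cinner (\<chi> i. L$i$j) (\<rho> *v (\<chi> i. L$i$j))"
    by (simp add: cstar_def matrix_matrix_mult_def cinner_def matrix_vector_mult_def
        sum_distrib_left sum_distrib_right mult_ac) (subst sum.swap, simp add: mult_ac)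
  then show ?thesis by (simp add: trace_def)
qed

lemma trace_form2:
  "trace (L ** \<rho> ** cstar L) = (\<Sum>i\<in>UNIV. cinner (\<chi> l. cnj (L$i$l)) (\<rho> *v (\<chi> l. cnj (L$i$l))))"
proof -
  have "\<And>i. (L ** \<rho> ** cstar L)$i$i = cinner (\<chi> l. cnj (L$i$l)) (\<rho> *v (\<chi> l. cnj (L$i$l)))"
    by (simp add: cstar_def matrix_matrix_mult_def cinner_def matrix_vector_mult_def
        sum_distrib_left sum_distrib_right mult_ac) (subst sum.swap, simp add: mult_ac)
  then show ?thesis by (simp add: trace_def)
qed

lemma sp_nonneg: "strictly_pos \<rho> \<Longrightarrow> 0 \<le> Re (cinner v (\<rho> *v v))"
  by (cases "v = 0") (auto simp: strictly_pos_def cinner_def intro: less_imp_le)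

lemma trace_form1_nonneg: "strictly_pos \<rho> \<Longrightarrow> 0 \<le> Re (trace (cstar L ** \<rho> ** L))"
  by (simp add: trace_form1 Re_sum sum_nonneg sp_nonneg)

lemma trace_form2_nonneg: "strictly_pos \<rho> \<Longrightarrow> 0 \<le> Re (trace (L ** \<rho> ** cstar L))"
  by (simp add: trace_form2 Re_sum sum_nonneg sp_nonneg)

lemma trace_form1_zero:
  assumes sp: "strictly_pos \<rho>" and z: "Re (trace (cstar L ** \<rho> ** L)) = 0"
  shows "L = 0"
proof -
  have "\<forall>j\<in>UNIV. Re (cinner (\<chi> i. L$i$j) (\<rho> *v (\<chi> i. L$i$j))) = 0"
    using z sum_nonneg_eq_0_iff[of UNIV "\<lambda>j. Re (cinner (\<chi> i. L$i$j) (\<rho> *v (\<chi> i. L$i$j)))"]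
    by (simp add: trace_form1 Re_sum sp_nonneg[OF sp])
  then have "\<And>j. (\<chi> i. L$i$j) = 0" using sp by (auto simp: strictly_pos_def)
  then show ?thesis by (simp add: vec_eq_iff)
qed

lemma Eb_inj0:
  assumes sp: "strictly_pos \<rho>" and b: "0 \<le> b" "b \<le> 1" and E: "Eb b \<rho> L = 0"
  shows "L = 0"
proof -
  have "cstar L ** Eb b \<rho> L = 0" using E by (simp add: matrix_matrix_mult_def vec_eq_iff)
  then have "((1 + b) / 2) *\<^sub>R (cstar L ** \<rho> ** L) + ((1 - b) / 2) *\<^sub>R (cstar L ** (L ** \<rho>)) = 0"
    by (simp add: Eb_def scaleR_cm mmc_add_l mmc_cm_r matrix_mul_assoc)
  then have "trace (((1 + b) / 2) *\<^sub>R (cstar L ** \<rho> ** L) + ((1 - b) / 2) *\<^sub>R (cstar L ** (L ** \<rho>))) = 0"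
    by simp
  then have h: "((1 + b) / 2) *\<^sub>R trace (cstar L ** \<rho> ** L) + ((1 - b) / 2) *\<^sub>R trace (L ** \<rho> ** cstar L) = 0"
    by (simp add: trace_add trace_scaleRc trace_mul_sym[of "cstar L" "L ** \<rho>"])
  have "((1 + b) / 2) * Re (trace (cstar L ** \<rho> ** L)) + ((1 - b) / 2) * Re (trace (L ** \<rho> ** cstar L)) = 0"
    using arg_cong[OF h, of Re] by (simp only: plus_complex.sel Re_scaleR' zero_complex.sel)
  moreover have "0 \<le> Re (trace (cstar L ** \<rho> ** L))" "0 \<le> Re (trace (L ** \<rho> ** cstar L))"
    using sp trace_form1_nonneg trace_form2_nonneg by blast+
  ultimately have "Re (trace (cstar L ** \<rho> ** L)) = 0" using b
  proof -
    fix x y :: real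
    have k: "x = 0" if "(1 + b) / 2 * x + (1 - b) / 2 * y = 0" "0 \<le> x" "0 \<le> y" for x y
    proof -
      have "0 \<le> (1 - b) / 2 * y" using that b by simp
      moreover have "0 \<le> (1 + b) / 2 * x" using that b by simp
      ultimately have "(1 + b) / 2 * x = 0" using that(1) by linarith
      then show "x = 0" using b by simp
    qed
    assume "(1 + b) / 2 * Re (trace (cstar L ** \<rho> ** L)) + (1 - b) / 2 * Re (trace (L ** \<rho> ** cstar L)) = 0"
      "0 \<le> Re (trace (cstar L ** \<rho> ** L))" "0 \<le> Re (trace (L ** \<rho> ** cstar L))"
    then show ?thesis by (rule k)
  qed
  then show ?thesis using trace_form1_zero[OF sp] by blast
qed

lemma Eb_inj:
  assumes sp: "strictly_pos \<rho>" and b: "0 \<le> b" "b \<le> 1"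
  shows "inj (Eb b \<rho>)"
proof (rule injI)
  fix X Y assume "Eb b \<rho> X = Eb b \<rho> Y"
  then have "Eb b \<rho> (X - Y) = 0" by (simp add: Eb_diff)
  then have "X - Y = 0" by (rule Eb_inj0[OF sp b])
  then show "X = Y" by simp
qed

lemma Eb_surj:
  assumes sp: "strictly_pos \<rho>" and b: "0 \<le> b" "b \<le> 1"
  shows "surj (Eb b \<rho>)"
  using linear_injective_imp_surjective[OF linear_Eb Eb_inj[OF sp b]] by simp

lemma logder_prop:
  assumes sp: "strictly_pos \<rho>" and b: "0 \<le> b" "b \<le> 1"
  shows "Eb b \<rho> (logder b \<rho> D) = D"
proof -
  have ex: "\<exists>!L. D = Eb b \<rho> L"
    using Eb_surj[OF sp b] Eb_inj[OF sp b] by (metis injD surjD)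
  show ?thesis unfolding logder_def using theI'[OF ex] by (simp add: Eb_def)
qed

lemma commop_prop:
  assumes sp: "strictly_pos \<rho>"
  shows "commop \<rho> X ** \<rho> + \<rho> ** commop \<rho> X = cm \<i> (X ** \<rho> - \<rho> ** X)"
proof -
  let ?R = "cm \<i> (X ** \<rho> - \<rho> ** X)"
  have e: "Y ** \<rho> + \<rho> ** Y = 2 *\<^sub>R Eb 0 \<rho> Y" for Y
    by (simp add: Eb_def scaleR_add_right add.commute)
  obtain Y where Y: "Eb 0 \<rho> Y = (1/2) *\<^sub>R ?R" using Eb_surj[OF sp] by (metis order_refl zero_le_one surjD)
  have ex: "\<exists>!Y. Y ** \<rho> + \<rho> ** Y = ?R"
  proof
    show "Y ** \<rho> + \<rho> ** Y = ?R" using Y by (simp add: e)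
  next
    fix Z assume "Z ** \<rho> + \<rho> ** Z = ?R"
    then have "cm 2 (Eb 0 \<rho> Z) = ?R" using e[of Z] by (simp add: scaleR_cm)
    then have "cm (1/2) (cm 2 (Eb 0 \<rho> Z)) = cm (1/2) ?R" by simp
    then have "Eb 0 \<rho> Z = Eb 0 \<rho> Y" using Y by (simp add: scaleR_cm cm_cm)
    then show "Z = Y" using Eb_inj[OF sp] by (metis order_refl zero_le_one injD)
  qed
  show ?thesis unfolding commop_def cm_def using theI'[OF ex[unfolded cm_def]] .
qed

definition pc :: "complex^'n^'n \<Rightarrow> complex^'n^'n \<Rightarrow> complex^'n^'n \<Rightarrow> complex" where
  "pc \<rho> X Y = trace (Eb 0 \<rho> X ** Y)"

lemma tr_cyc: "trace ((A::complex^'n^'n) ** B ** C) = trace (B ** C ** A)"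
  by (metis matrix_mul_assoc trace_mul_sym)

lemma mm_scaleRc_l: "(c *\<^sub>R (A::complex^'m^'n)) ** B = c *\<^sub>R (A ** B)"
  by (simp add: scaleR_cm mmc_cm_l)

lemma pc_expand: "pc \<rho> X Y = (trace (\<rho> ** X ** Y) + trace (X ** \<rho> ** Y)) / 2"
  by (simp add: pc_def Eb_def mmc_add_r mm_scaleRc_l trace_add trace_scaleRc cscaleR field_simps)

lemma pc_sym: "pc \<rho> X Y = pc \<rho> Y X"
proof -
  have "trace (\<rho> ** Y ** X) = trace (X ** \<rho> ** Y)" by (rule tr_cyc[symmetric])
  moreover have "trace (Y ** \<rho> ** X) = trace (\<rho> ** X ** Y)" by (rule tr_cyc)
  ultimately show ?thesis by (simp add: pc_expand add.commute)
qed

lemma pc_add: "pc \<rho> X (Y + Z) = pc \<rho> X Y + pc \<rho> X Z"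
  by (simp add: pc_def mmc_add_l trace_add)
lemma pc_diff: "pc \<rho> X (Y - Z) = pc \<rho> X Y - pc \<rho> X Z"
  by (simp add: pc_def mmc_diff_l trace_sub)
lemma pc_cm: "pc \<rho> X (cm c Y) = c * pc \<rho> X Y"
  by (simp add: pc_def mmc_cm_r trace_cm)
lemma pc_scaleR: "pc \<rho> X (c *\<^sub>R Y) = c *\<^sub>R pc \<rho> X Y"
  by (simp add: scaleR_cm pc_cm cscaleR)
lemma pc_sum: "pc \<rho> X (\<Sum>k\<in>S. f k) = (\<Sum>k\<in>S. pc \<rho> X (f k))"
  by (simp add: pc_def mmc_sum_r trace_sum)
lemma pc_add1: "pc \<rho> (Y + Z) X = pc \<rho> Y X + pc \<rho> Z X"
  by (metis pc_add pc_sym)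
lemma pc_scaleR1: "pc \<rho> (c *\<^sub>R Y) X = c *\<^sub>R pc \<rho> Y X"
  by (metis pc_scaleR pc_sym)
lemma pc_sum1: "pc \<rho> (\<Sum>k\<in>S. f k) X = (\<Sum>k\<in>S. pc \<rho> (f k) X)"
  by (metis (no_types, lifting) pc_sum pc_sym sum.cong)
lemma pc_zero: "pc \<rho> X 0 = 0" by (simp add: pc_def)

lemma cstar_mult: "cstar (A ** B) = cstar (B::complex^'n^'n) ** cstar A"
  by (simp add: cstar_def matrix_matrix_mult_def vec_eq_iff mult.commute)

lemma cnj_trace: "cnj (trace (A::complex^'n^'n)) = trace (cstar A)"
  by (simp add: trace_def cstar_def)

lemma herm_cstar: "hermitian A \<Longrightarrow> cstar A = A" by (simp add: hermitian_def)

lemma pc_cnj: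
  assumes "hermitian \<rho>" "hermitian X" "hermitian Y"
  shows "cnj (pc \<rho> X Y) = pc \<rho> X Y"
proof -
  have "cnj (trace (\<rho> ** X ** Y)) = trace (Y ** X ** \<rho>)"
    using assms by (simp add: cnj_trace cstar_mult herm_cstar matrix_mul_assoc)
  also have "\<dots> = trace (X ** \<rho> ** Y)" by (rule tr_cyc)
  finally have 1: "cnj (trace (\<rho> ** X ** Y)) = trace (X ** \<rho> ** Y)" .
  have "cnj (trace (X ** \<rho> ** Y)) = trace (Y ** \<rho> ** X)"
    using assms by (simp add: cnj_trace cstar_mult herm_cstar matrix_mul_assoc)
  also have "\<dots> = trace (\<rho> ** X ** Y)" by (rule tr_cyc)
  finally have 2: "cnj (trace (X ** \<rho> ** Y)) = trace (\<rho> ** X ** Y)" .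
  show ?thesis by (simp add: pc_expand 1 2 add.commute)
qed

lemma pc_real:
  assumes "hermitian \<rho>" "hermitian X" "hermitian Y"
  shows "pc \<rho> X Y = complex_of_real (Re (pc \<rho> X Y))"
proof -
  have "Im (pc \<rho> X Y) = 0" using arg_cong[OF pc_cnj[OF assms], of Im] by simp
  then show ?thesis by (simp add: complex_eq_iff)
qed

lemma pc_self:
  assumes "hermitian \<rho>" "hermitian X"
  shows "pc \<rho> X X = trace (cstar X ** \<rho> ** X)"
proof -
  have "trace (\<rho> ** X ** X) = trace (X ** \<rho> ** X)" by (rule tr_cyc[symmetric])
  then show ?thesis using assms by (simp add: pc_expand herm_cstar)
qed

lemma pc_pos:
  assumes "strictly_pos \<rho>" "hermitian X"
  shows "0 \<le> Re (pc \<rho> X X)"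
  using assms pc_self trace_form1_nonneg by (metis strictly_pos_def)

lemma pc_pos0:
  assumes "strictly_pos \<rho>" "hermitian X" "Re (pc \<rho> X X) = 0"
  shows "X = 0"
  using assms pc_self trace_form1_zero by (metis strictly_pos_def)

lemma Eb0_commop:
  assumes "strictly_pos \<rho>"
  shows "Eb 0 \<rho> (commop \<rho> X) = cm (\<i>/2) (X ** \<rho> - \<rho> ** X)"
proof -
  have "Eb 0 \<rho> (commop \<rho> X) = (1/2) *\<^sub>R (commop \<rho> X ** \<rho> + \<rho> ** commop \<rho> X)"
    by (simp add: Eb_def scaleR_add_right add.commute)
  also have "\<dots> = cm (\<i>/2) (X ** \<rho> - \<rho> ** X)"
    using commop_prop[OF assms] by (simp add: scaleR_cm cm_cm)
  finally show ?thesis .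
qed

lemma pc_skew:
  assumes "strictly_pos \<rho>"
  shows "pc \<rho> (commop \<rho> X) Y = - pc \<rho> X (commop \<rho> Y)"
proof -
  have a: "pc \<rho> (commop \<rho> X) Y = (\<i>/2) * (trace (X ** \<rho> ** Y) - trace (\<rho> ** X ** Y))"
    by (simp add: pc_def Eb0_commop[OF assms] mmc_cm_l trace_cm mmc_diff_r trace_sub)
  have b: "pc \<rho> (commop \<rho> Y) X = (\<i>/2) * (trace (Y ** \<rho> ** X) - trace (\<rho> ** Y ** X))"
    by (simp add: pc_def Eb0_commop[OF assms] mmc_cm_l trace_cm mmc_diff_r trace_sub)
  have c1: "trace (Y ** \<rho> ** X) = trace (\<rho> ** X ** Y)" by (rule tr_cyc)
  have c2: "trace (\<rho> ** Y ** X) = trace (X ** \<rho> ** Y)" by (rule tr_cyc[symmetric])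
  have c: "pc \<rho> X (commop \<rho> Y) = (\<i>/2) * (trace (\<rho> ** X ** Y) - trace (X ** \<rho> ** Y))"
    using b pc_sym[of \<rho> X "commop \<rho> Y"] by (simp only: c1 c2)
  show ?thesis by (simp only: a c) (simp add: algebra_simps)
qed

locale qsetup =
  fixes \<rho> :: "complex^'n::finite^'n" and Ls :: "'d::finite \<Rightarrow> complex^'n^'n"
    and T :: "(complex^'n^'n) set"
  assumes sp: "strictly_pos \<rho>"
    and indep: "\<forall>c::'d \<Rightarrow> real. (\<Sum>i\<in>UNIV. c i *\<^sub>R Ls i) = 0 \<longrightarrow> (\<forall>i. c i = 0)"
    and subT: "subspace T" and dimT: "dim T = CARD('d) + 1"
    and hermT: "\<forall>X\<in>T. hermitian X"
    and spanT: "span (range Ls) \<subseteq> T" and DT: "commop \<rho> ` T \<subseteq> T"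
begin

definition g where "g X Y = Re (pc \<rho> X Y)"

lemma rhoH: "hermitian \<rho>" using sp by (simp add: strictly_pos_def)

lemma LsT: "Ls i \<in> T" using spanT span_superset by blast

lemma g_sym: "g X Y = g Y X" by (simp add: g_def pc_sym)
lemma g_add: "g X (Y + Z) = g X Y + g X Z" by (simp add: g_def pc_add)
lemma g_diff: "g X (Y - Z) = g X Y - g X Z" by (simp add: g_def pc_diff)
lemma g_scaleR: "g X (c *\<^sub>R Y) = c * g X Y" by (simp add: g_def pc_scaleR)
lemma g_sum: "g X (\<Sum>k\<in>S. f k) = (\<Sum>k\<in>S. g X (f k))" by (simp add: g_def pc_sum Re_sum)
lemma g_add1: "g (Y + Z) X = g Y X + g Z X" by (simp add: g_def pc_add1)
lemma g_scaleR1: "g (c *\<^sub>R Y) X = c * g Y X" by (simp add: g_def pc_scaleR1)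
lemma g_sum1: "g (\<Sum>k\<in>S. f k) X = (\<Sum>k\<in>S. g (f k) X)" by (simp add: g_def pc_sum1 Re_sum)

lemma pcT: "X \<in> T \<Longrightarrow> Y \<in> T \<Longrightarrow> pc \<rho> X Y = complex_of_real (g X Y)"
  unfolding g_def using pc_real rhoH hermT by blast

lemma g_pos: "X \<in> T \<Longrightarrow> 0 \<le> g X X"
  unfolding g_def using pc_pos sp hermT by blast

lemma g_pos0: "X \<in> T \<Longrightarrow> g X X = 0 \<Longrightarrow> X = 0"
  unfolding g_def using pc_pos0 sp hermT by blast

lemma combT: "(\<Sum>i\<in>UNIV. c i *\<^sub>R Ls i) \<in> T"
  by (intro subspace_sum subT subspace_scale LsT)

definition M :: "real^'d^'d" where "M = (\<chi> i j. g (Ls i) (Ls j))"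

lemma M_inj: "M *v c = 0 \<Longrightarrow> c = 0"
proof -
  assume Mc: "M *v c = 0"
  define X where "X = (\<Sum>j\<in>UNIV. c$j *\<^sub>R Ls j)"
  have XT: "X \<in> T" unfolding X_def by (rule combT)
  have "\<And>i. (M *v c)$i = g (Ls i) X"
    by (simp add: M_def X_def matrix_vector_mult_def g_sum g_scaleR mult.commute)
  then have "c \<bullet> (M *v c) = g X X"
    by (simp add: inner_vec_def X_def g_sum1 g_scaleR1)
  then have "g X X = 0" using Mc by simp
  then have "X = 0" using g_pos0 XT by blast
  then have "\<forall>i. c$i = 0" using indep unfolding X_def by blast
  then show "c = 0" by (simp add: vec_eq_iff)
qed

lemma M_sym: "transpose M = M"
  by (simp add: M_def transpose_def vec_eq_iff g_sym)

definition a :: "real^'d^'d" where "a = matrix_inv M"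

lemma a_inv: "M ** a = mat 1" "a ** M = mat 1"
proof -
  have "inj ((*v) M)" using M_inj by (simp add: vec.inj_iff_eq_0)
  then obtain B where B: "B ** M = mat 1" using matrix_left_invertible_injective by blast
  then have "M ** B = mat 1" using matrix_left_right_inverse by blast
  then have "M ** a = mat 1 \<and> a ** M = mat 1"
    unfolding a_def matrix_inv_def using B by (rule someI[where x = B, OF conjI])
  then show "M ** a = mat 1" "a ** M = mat 1" by blast+
qed

lemma a_sym: "transpose a = a"
proof -
  have "transpose a ** M = mat 1"
    using a_inv(1) by (metis M_sym matrix_transpose_mul transpose_mat)
  then have "transpose a = transpose a ** (M ** a)" using a_inv(1) by simp
  also have "\<dots> = a" using \<open>transpose a ** M = mat 1\<close> by (simp add: matrix_mul_assoc)
  finally show ?thesis .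
qed

lemma a_entry_sym: "a$i$j = a$j$i" using a_sym by (rule sym_entry)

definition Ld :: "'d \<Rightarrow> complex^'n^'n" where "Ld j = (\<Sum>k\<in>UNIV. a$k$j *\<^sub>R Ls k)"

lemma LdT: "Ld j \<in> T" unfolding Ld_def by (rule combT)

lemma g_Ls_Ld: "g (Ls i) (Ld j) = (if i = j then 1 else 0)"
proof -
  have "g (Ls i) (Ld j) = (M ** a)$i$j"
    by (simp add: Ld_def g_sum g_scaleR M_def matrix_matrix_mult_def mult.commute)
  then show ?thesis using a_inv(1) by (simp add: mat_def)
qed

definition phi :: "complex^'n^'n \<Rightarrow> real^'d" where "phi X = (\<chi> i. g (Ls i) X)"

lemma linear_phi: "linear phi"
  by (intro linearI) (simp_all add: phi_def vec_eq_iff g_add g_scaleR)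

lemma ex_perp: "\<exists>X\<in>T. X \<noteq> 0 \<and> (\<forall>i. g (Ls i) X = 0)"
proof (rule ccontr)
  assume "\<not> ?thesis"
  then have z: "\<And>X. X \<in> T \<Longrightarrow> phi X = 0 \<Longrightarrow> X = 0" by (auto simp: phi_def vec_eq_iff)
  have sT: "span T = T" using subT by (simp add: span_eq_iff)
  have "inj_on phi (span T)"
  proof (rule inj_onI)
    fix X Y assume "X \<in> span T" "Y \<in> span T" "phi X = phi Y"
    then have "X - Y \<in> T" "phi (X - Y) = 0" using sT subT linear_diff[OF linear_phi]
      by (auto simp: subspace_diff)
    then show "X = Y" using z by fastforce
  qed
  then have "dim (phi ` T) = dim T" by (rule dim_image_eq[OF linear_phi])
  moreover have "dim (phi ` T) \<le> CARD('d)" using dim_subset_UNIV[of "phi ` T"] by simp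
  ultimately show False using dimT by simp
qed

definition L0 :: "complex^'n^'n" where
  "L0 = (SOME Y. Y \<in> T \<and> g Y Y = 1 \<and> (\<forall>i. g (Ls i) Y = 0))"

lemma L0_prop: "L0 \<in> T" "g L0 L0 = 1" "\<And>i. g (Ls i) L0 = 0"
proof -
  obtain X where X: "X \<in> T" "X \<noteq> 0" "\<forall>i. g (Ls i) X = 0" using ex_perp by blast
  have p: "0 < g X X" using g_pos[OF X(1)] g_pos0[OF X(1)] X(2) by fastforce
  define Y where "Y = (1 / sqrt (g X X)) *\<^sub>R X"
  have "Y \<in> T" using X subT by (simp add: Y_def subspace_scale)
  moreover have "g Y Y = 1" using p by (simp add: Y_def g_scaleR g_scaleR1 real_sqrt_mult[symmetric])
  moreover have "\<forall>i. g (Ls i) Y = 0" using X by (simp add: Y_def g_scaleR)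
  ultimately have "\<exists>Y. Y \<in> T \<and> g Y Y = 1 \<and> (\<forall>i. g (Ls i) Y = 0)" by blast
  then have "L0 \<in> T \<and> g L0 L0 = 1 \<and> (\<forall>i. g (Ls i) L0 = 0)" unfolding L0_def by (rule someI_ex)
  then show "L0 \<in> T" "g L0 L0 = 1" "\<And>i. g (Ls i) L0 = 0" by blast+
qed

lemma g_L0_Ld: "g L0 (Ld j) = 0"
  by (simp add: Ld_def g_sum g_scaleR g_sym[of L0] L0_prop)

definition sig :: "(real^'d) \<times> real \<Rightarrow> complex^'n^'n" where
  "sig p = (\<Sum>k\<in>UNIV. (fst p)$k *\<^sub>R Ld k) + snd p *\<^sub>R L0"

lemma linear_sig: "linear sig"
  by (intro linearI)
     (simp_all add: sig_def scaleR_add_left scaleR_add_right sum.distrib scaleR_sum_right algebra_simps)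

lemma sigT: "sig p \<in> T"
  unfolding sig_def using LdT L0_prop(1) subT
  by (intro subspace_add subspace_sum subspace_scale) auto

lemma g_sig: "g (Ls i) (sig p) = (fst p)$i" "g L0 (sig p) = snd p"
  by (simp_all add: sig_def g_add g_sum g_scaleR g_Ls_Ld L0_prop g_L0_Ld if_distrib cong: if_cong)

lemma decomp:
  assumes Y: "Y \<in> T"
  shows "Y = (\<Sum>k\<in>UNIV. g (Ls k) Y *\<^sub>R Ld k) + g L0 Y *\<^sub>R L0"
proof -
  have inj: "inj sig"
  proof (rule injI)
    fix p q assume "sig p = sig q"
    then have "\<forall>i. (fst p)$i = (fst q)$i" "snd p = snd q" using g_sig by metis+
    then show "p = q" by (simp add: prod_eq_iff vec_eq_iff)
  qed
  have "dim (sig ` UNIV) = dim (UNIV :: ((real^'d) \<times> real) set)"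
    using dim_image_eq[OF linear_sig] inj by (metis inj_on_subset subset_UNIV)
  then have d: "dim (sig ` UNIV) = CARD('d) + 1" by simp
  have sub: "sig ` UNIV \<subseteq> T" using sigT by blast
  have "span (sig ` UNIV) = span T" using dim_eq_span[OF sub] d dimT by simp
  moreover have "span (sig ` UNIV) = sig ` UNIV"
    using linear_subspace_image[OF linear_sig subspace_UNIV] by (simp add: span_eq_iff)
  moreover have "span T = T" using subT by (simp add: span_eq_iff)
  ultimately obtain p where p: "Y = sig p" using Y by blast
  have k1: "\<And>k. (fst p)$k = g (Ls k) Y" and k2: "snd p = g L0 Y" using g_sig p by simp_all
  have "Y = (\<Sum>k\<in>UNIV. (fst p)$k *\<^sub>R Ld k) + snd p *\<^sub>R L0" using p by (simp only: sig_def)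
  then show ?thesis by (simp only: k1 k2)
qed

end

lemma Eb_beta:
  assumes sp: "strictly_pos \<rho>"
  shows "Eb b \<rho> X = Eb 0 \<rho> X + cm (\<i> * complex_of_real b) (Eb 0 \<rho> (commop \<rho> X))"
proof -
  have "Eb 0 \<rho> X + cm (\<i> * complex_of_real b) (Eb 0 \<rho> (commop \<rho> X))
      = Eb 0 \<rho> X + cm (\<i> * complex_of_real b) (cm (\<i>/2) (X ** \<rho> - \<rho> ** X))"
    by (simp add: Eb0_commop[OF sp])
  also have "\<dots> = Eb b \<rho> X"
    by (simp add: Eb_def vec_eq_iff cscaleR algebra_simps add_divide_distrib diff_divide_distrib)
  finally show ?thesis by simp
qed

lemma sum_entry: "(\<Sum>k\<in>S. f k) $ i $ j = (\<Sum>k\<in>S. f k $ i $ j)"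
  by (simp add: sum_component)

lemma scal_id:
  fixes A B W d :: "'d \<Rightarrow> complex" and V e b :: complex
  shows "(\<Sum>m\<in>S. A m * d m) + \<i>*b*((\<Sum>m\<in>S. B m * d m) + V * e) - \<i>*b*V*(e + \<i>*b*(\<Sum>m\<in>S. (- W m) * d m))
     = (\<Sum>m\<in>S. (A m - b*b*W m*V + \<i>*b*B m) * d m)"
proof -
  have r: "(\<Sum>m\<in>S. (A m - b*b*W m*V + \<i>*b*B m) * d m)
     = (\<Sum>m\<in>S. A m * d m) - b*b*V*(\<Sum>m\<in>S. W m * d m) + \<i>*b*(\<Sum>m\<in>S. B m * d m)"
    by (simp add: sum.distrib sum_subtractf sum_distrib_left algebra_simps)
  have l: "(\<Sum>m\<in>S. (- W m) * d m) = - (\<Sum>m\<in>S. W m * d m)" by (simp add: sum_negf)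
  show ?thesis unfolding r l by (simp add: algebra_simps)
qed

context qsetup
begin

definition DL0 where "DL0 = commop \<rho> L0"
definition F :: "'d \<Rightarrow> 'd \<Rightarrow> real" where
  "F m j = (\<Sum>k\<in>UNIV. a$m$k * g (Ls k) (commop \<rho> (Ld j)))"
definition v :: "'d \<Rightarrow> real" where "v j = g L0 (commop \<rho> (Ld j))"
definition w :: "'d \<Rightarrow> real" where "w m = (\<Sum>k\<in>UNIV. a$m$k * g (Ls k) DL0)"

lemma reindex: "(\<Sum>k\<in>UNIV. c k *\<^sub>R Ld k) = (\<Sum>m\<in>UNIV. (\<Sum>k\<in>UNIV. a$m$k * c k) *\<^sub>R Ls m)"
proof -
  have "(\<Sum>k\<in>UNIV. c k *\<^sub>R Ld k) = (\<Sum>k\<in>UNIV. \<Sum>m\<in>UNIV. (a$m$k * c k) *\<^sub>R Ls m)"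
    by (simp add: Ld_def scaleR_sum_right mult.commute)
  also have "\<dots> = (\<Sum>m\<in>UNIV. \<Sum>k\<in>UNIV. (a$m$k * c k) *\<^sub>R Ls m)" by (rule sum.swap)
  also have "\<dots> = (\<Sum>m\<in>UNIV. (\<Sum>k\<in>UNIV. a$m$k * c k) *\<^sub>R Ls m)" by (simp add: scaleR_sum_left)
  finally show ?thesis .
qed

lemma DLdT: "commop \<rho> (Ld j) \<in> T" using DT LdT by blast
lemma DL0T: "DL0 \<in> T" using DT L0_prop(1) by (auto simp: DL0_def)

lemma DLd_decomp: "commop \<rho> (Ld j) = (\<Sum>m\<in>UNIV. F m j *\<^sub>R Ls m) + v j *\<^sub>R L0"
  using decomp[OF DLdT] by (simp add: reindex F_def v_def)

lemma gL0DL0: "g L0 DL0 = 0"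
proof -
  have "pc \<rho> DL0 L0 = - pc \<rho> L0 DL0" unfolding DL0_def by (rule pc_skew[OF sp])
  then have "pc \<rho> L0 DL0 = 0" using pc_sym[of \<rho> L0 DL0] by simp
  then show ?thesis by (simp add: g_def)
qed

lemma DL0_decomp: "DL0 = (\<Sum>m\<in>UNIV. w m *\<^sub>R Ls m)"
  using decomp[OF DL0T] by (simp add: reindex w_def gL0DL0)

lemma w_v: "w m = - v m"
proof -
  have "pc \<rho> DL0 (Ld m) = - pc \<rho> L0 (commop \<rho> (Ld m))" unfolding DL0_def by (rule pc_skew[OF sp])
  then have "v m = - g DL0 (Ld m)" by (simp add: v_def g_def)
  also have "g DL0 (Ld m) = (\<Sum>k\<in>UNIV. a$k$m * g DL0 (Ls k))"
    by (simp add: Ld_def g_sum g_scaleR)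
  also have "\<dots> = w m" by (simp add: w_def a_entry_sym[of _ m] g_sym[of DL0])
  finally show ?thesis by simp
qed

definition Kmat :: "real \<Rightarrow> complex^'d^'d" where
  "Kmat b = (\<chi> m j. complex_of_real (a$m$j - b^2 * v m * v j) + \<i> * complex_of_real (b * F m j))"

lemma J_inv:
  assumes dr: "\<And>k. Eb 0 \<rho> (Ls k) = dr k" and b: "0 \<le> b" "b \<le> 1"
  shows "Jmat b \<rho> dr ** Kmat b = mat 1"
proof -
  define Z where "Z j = Ld j - cm (\<i> * complex_of_real b * complex_of_real (v j)) L0" for j
  define E where "E = Eb 0 \<rho> L0"
  have e1: "Eb 0 \<rho> (Ld j) = (\<Sum>m\<in>UNIV. cm (complex_of_real (a$m$j)) (dr m))" for j
    by (simp add: Ld_def Eb_sum Eb_scaleR scaleR_cm Eb_cm dr)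
  have e2: "Eb 0 \<rho> (commop \<rho> (Ld j)) = (\<Sum>m\<in>UNIV. cm (complex_of_real (F m j)) (dr m)) + cm (complex_of_real (v j)) E" for j
    by (subst DLd_decomp) (simp add: Eb_sum Eb_add Eb_scaleR scaleR_cm Eb_cm dr E_def)
  have e3: "Eb 0 \<rho> (commop \<rho> L0) = (\<Sum>m\<in>UNIV. cm (complex_of_real (- v m)) (dr m))"
    using DL0_decomp by (simp add: DL0_def Eb_sum Eb_scaleR scaleR_cm Eb_cm dr w_v)
  have EZ: "Eb b \<rho> (Z j) = (\<Sum>m\<in>UNIV. cm (Kmat b $ m $ j) (dr m))" for j
  proof -
    have "Eb b \<rho> (Z j) = Eb b \<rho> (Ld j) - cm (\<i> * complex_of_real b * complex_of_real (v j)) (Eb b \<rho> L0)"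
      by (simp add: Z_def Eb_diff Eb_cm)
    also have "\<dots> = (Eb 0 \<rho> (Ld j) + cm (\<i> * complex_of_real b) (Eb 0 \<rho> (commop \<rho> (Ld j))))
        - cm (\<i> * complex_of_real b * complex_of_real (v j)) (E + cm (\<i> * complex_of_real b) (Eb 0 \<rho> (commop \<rho> L0)))"
      by (simp add: Eb_beta[OF sp, of b] E_def)
    also have "\<dots> = (\<Sum>m\<in>UNIV. cm (Kmat b $ m $ j) (dr m))"
    proof -
      have "\<And>p q. ((\<Sum>m\<in>UNIV. complex_of_real (a$m$j) * dr m $ p $ q)
          + \<i> * complex_of_real b * ((\<Sum>m\<in>UNIV. complex_of_real (F m j) * dr m $ p $ q) + complex_of_real (v j) * E $ p $ q))
          - \<i> * complex_of_real b * complex_of_real (v j) * (E $ p $ q + \<i> * complex_of_real b * (\<Sum>m\<in>UNIV. (- complex_of_real (v m)) * dr m $ p $ q))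
        = (\<Sum>m\<in>UNIV. (complex_of_real (a$m$j) - complex_of_real b * complex_of_real b * complex_of_real (v m) * complex_of_real (v j)
              + \<i> * complex_of_real b * complex_of_real (F m j)) * dr m $ p $ q)"
        by (rule scal_id)
      then show ?thesis
        by (simp add: e1 e2 e3 vec_eq_iff sum_entry Kmat_def mult.assoc power2_eq_square)
    qed
    finally show ?thesis .
  qed
  define Lb where "Lb m = logder b \<rho> (dr m)" for m
  have Lb: "Eb b \<rho> (Lb m) = dr m" for m using logder_prop[OF sp b] by (simp add: Lb_def)
  have ZL: "(\<Sum>m\<in>UNIV. cm (Kmat b $ m $ j) (Lb m)) = Z j" for j
  proof -
    have "Eb b \<rho> (\<Sum>m\<in>UNIV. cm (Kmat b $ m $ j) (Lb m)) = Eb b \<rho> (Z j)"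
      by (simp add: Eb_sum Eb_cm Lb EZ)
    then show ?thesis using Eb_inj[OF sp b] by (simp add: inj_eq)
  qed
  have "(Jmat b \<rho> dr ** Kmat b) $ i $ j = (if i = j then 1 else 0)" for i j
  proof -
    have "(Jmat b \<rho> dr ** Kmat b) $ i $ j = (\<Sum>m\<in>UNIV. trace (dr i ** Lb m) * Kmat b $ m $ j)"
      by (simp add: Jmat_def matrix_matrix_mult_def Lb_def)
    also have "\<dots> = trace (dr i ** (\<Sum>m\<in>UNIV. cm (Kmat b $ m $ j) (Lb m)))"
      by (simp only: mmc_sum_r mmc_cm_r trace_sum trace_cm mult.commute)
    also have "\<dots> = pc \<rho> (Ls i) (Z j)" by (simp add: ZL pc_def dr)
    also have "\<dots> = pc \<rho> (Ls i) (Ld j) - (\<i> * complex_of_real b * complex_of_real (v j)) * pc \<rho> (Ls i) L0"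
      by (simp add: Z_def pc_diff pc_cm)
    also have "\<dots> = (if i = j then 1 else 0)"
      by (simp add: pcT[OF LsT LdT] pcT[OF LsT L0_prop(1)] g_Ls_Ld L0_prop)
    finally show ?thesis .
  qed
  then show ?thesis by (simp add: vec_eq_iff mat_def)
qed

end

lemma final_real:
  fixes C :: "real \<Rightarrow> real" and t0 q c bh :: real and P :: bool
  assumes C: "\<And>b. 0 \<le> b \<Longrightarrow> b \<le> 1 \<Longrightarrow> C b = t0 - b^2 * q + b * c"
    and c: "0 \<le> c" and q: "0 \<le> q" and P: "P \<longleftrightarrow> 0 < q" and bh: "bh = c / (2 * q)"
  shows "(\<forall>\<beta>\<in>{0..1}. C \<beta> \<le> (if P \<and> bh < 1 then C bh else C 1))
         \<and> (if P \<and> bh < 1 then C bh else C 1) \<in> C ` {0..1}"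
proof (cases "P \<and> bh < 1")
  case True
  then have qp: "0 < q" and b1: "bh < 1" using P by auto
  have b0: "0 \<le> bh" using bh c qp by simp
  have cq: "c = 2 * q * bh" using bh qp by simp
  have "C \<beta> \<le> C bh" if "\<beta> \<in> {0..1}" for \<beta>
  proof -
    have "C bh - C \<beta> = q * (\<beta> - bh)^2"
      using that b0 b1 by (simp add: C cq power2_eq_square algebra_simps)
    moreover have "0 \<le> q * (\<beta> - bh)^2" using q by simp
    ultimately show ?thesis by linarith
  qed
  then show ?thesis using True b0 b1 by auto
next
  case False
  have "C \<beta> \<le> C 1" if "\<beta> \<in> {0..1}" for \<beta>
  proof -
    have bb: "0 \<le> \<beta>" "\<beta> \<le> 1" using that by auto
    have d: "C 1 - C \<beta> = (1 - \<beta>) * (c - q * (1 + \<beta>))"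
      using bb by (simp add: C power2_eq_square algebra_simps)
    show ?thesis
    proof (cases "q = 0")
      case True
      then have "C 1 - C \<beta> = (1 - \<beta>) * c" using d by simp
      moreover have "0 \<le> (1 - \<beta>) * c" using bb c by simp
      ultimately show ?thesis by linarith
    next
      case qn: False
      then have qp: "0 < q" using q by simp
      then have "1 \<le> bh" using False P by auto
      then have "2 * q \<le> c" using qp bh by (simp add: le_divide_eq)
      moreover have "q * (1 + \<beta>) \<le> q * 2" using bb qp by (intro mult_left_mono) auto
      ultimately have "0 \<le> c - q * (1 + \<beta>)" by linarith
      then have "0 \<le> (1 - \<beta>) * (c - q * (1 + \<beta>))" using bb by simp
      then show ?thesis using d by linarith
    qed
  qed
  then show ?thesis using False by auto
qed

lemma inv_eqI:
  fixes A B :: "complex^'d^'d"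
  assumes "A ** B = mat 1"
  shows "matrix_inv A = B"
proof -
  have BA: "B ** A = mat 1" using assms matrix_left_right_inverse by blast
  show ?thesis unfolding matrix_inv_def
  proof (rule some_equality)
    show "A ** B = mat 1 \<and> B ** A = mat 1" using assms BA by blast
  next
    fix A' assume "A ** A' = mat 1 \<and> A' ** A = mat 1"
    then have "A' = A' ** (A ** B)" "A' ** A = mat 1" using assms by auto
    then show "A' = B" by (simp add: matrix_mul_assoc)
  qed
qed

lemma re_trace:
  "Re (trace (map_matrix complex_of_real (G::real^'d^'d) ** K)) = (\<Sum>i\<in>UNIV. \<Sum>k\<in>UNIV. G$i$k * Re (K$k$i))"
  by (simp add: trace_def matrix_matrix_mult_def Re_sum)

theorem theorem6:
  fixes \<rho>\<^sub>f :: "real^'d::finite \<Rightarrow> complex^'n::finite^'n"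
    and \<Theta> :: "(real^'d) set"
    and \<theta>\<^sub>0 :: "real^'d"
    and G :: "real^'d^'d"
  assumes "open \<Theta>" and "\<theta>\<^sub>0 \<in> \<Theta>"
    and "\<forall>\<theta>\<in>\<Theta>. density_op (\<rho>\<^sub>f \<theta>)"
    and "smooth_on \<rho>\<^sub>f \<Theta>"
    and "strictly_pos (\<rho>\<^sub>f \<theta>\<^sub>0)"
    and "\<forall>c::'d \<Rightarrow> real. (\<Sum>i\<in>UNIV. c i *\<^sub>R logder 0 (\<rho>\<^sub>f \<theta>\<^sub>0) (partial i \<rho>\<^sub>f \<theta>\<^sub>0)) = 0
            \<longrightarrow> (\<forall>i. c i = 0)"
    and "\<exists>T :: (complex^'n^'n) set. subspace T \<and> dim T = CARD('d) + 1
            \<and> (\<forall>X\<in>T. hermitian X)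
            \<and> span (range (\<lambda>i. logder 0 (\<rho>\<^sub>f \<theta>\<^sub>0) (partial i \<rho>\<^sub>f \<theta>\<^sub>0))) \<subseteq> T
            \<and> commop (\<rho>\<^sub>f \<theta>\<^sub>0) ` T \<subseteq> T"
    and "rposdef G"
  shows
    "let \<rho> = \<rho>\<^sub>f \<theta>\<^sub>0;
         dr = (\<lambda>i. partial i \<rho>\<^sub>f \<theta>\<^sub>0);
         C = (\<lambda>\<beta>. Cbound \<beta> \<rho> dr G);
         JSinv = matrix_inv (Jmat 0 \<rho> dr);
         JRinv = matrix_inv (Jmat 1 \<rho> dr);
         ReJRinv = map_matrix complex_of_real (Re_mat JRinv);
         \<beta>hat = trace (mabs (msqrt G ** Im_mat JRinv ** msqrt G))
                / (2 * Re (trace (map_matrix complex_of_real G ** (JSinv - ReJRinv))));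
         Cmax = (if JSinv \<noteq> ReJRinv \<and> \<beta>hat < 1 then C \<beta>hat else C 1)
     in (\<forall>\<beta>\<in>{0..1}. C \<beta> \<le> Cmax) \<and> Cmax \<in> C ` {0..1}"
proof -
  define \<rho> where "\<rho> = \<rho>\<^sub>f \<theta>\<^sub>0"
  define dr where "dr = (\<lambda>i. partial i \<rho>\<^sub>f \<theta>\<^sub>0)"
  define Ls where "Ls i = logder 0 \<rho> (dr i)" for i
  have sp: "strictly_pos \<rho>" using assms(5) by (simp add: \<rho>_def)
  obtain T :: "(complex^'n^'n) set" where T: "subspace T" "dim T = CARD('d) + 1" "\<forall>X\<in>T. hermitian X"
      "span (range Ls) \<subseteq> T" "commop \<rho> ` T \<subseteq> T"
    using assms(7) unfolding Ls_def \<rho>_def dr_def by blast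
  have ind: "\<forall>c::'d \<Rightarrow> real. (\<Sum>i\<in>UNIV. c i *\<^sub>R Ls i) = 0 \<longrightarrow> (\<forall>i. c i = 0)"
    using assms(6) unfolding Ls_def \<rho>_def dr_def by blast
  interpret Q: qsetup \<rho> Ls T
    by unfold_locales (use sp ind T in auto)
  have drE: "\<And>k. Eb 0 \<rho> (Ls k) = dr k" unfolding Ls_def using logder_prop[OF sp] by simp
  have inv: "\<And>b. 0 \<le> b \<Longrightarrow> b \<le> 1 \<Longrightarrow> matrix_inv (Jmat b \<rho> dr) = Q.Kmat b"
    using Q.J_inv[OF drE] inv_eqI by blast
  define Fm :: "real^'d^'d" where "Fm = (\<chi> m j. Q.F m j)"
  define vv :: "real^'d" where "vv = (\<chi> k. Q.v k)"
  have ImK: "Im_mat (Q.Kmat b) = b *\<^sub>R Fm" for b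
    by (simp add: Im_mat_def Q.Kmat_def Fm_def vec_eq_iff)
  have ReK: "\<And>k i. Re (Q.Kmat b $ k $ i) = Q.a$k$i - b^2 * Q.v k * Q.v i" for b
    by (simp add: Q.Kmat_def)
  define t0 where "t0 = (\<Sum>i\<in>UNIV. \<Sum>k\<in>UNIV. G$i$k * Q.a$k$i)"
  define q where "q = (\<Sum>i\<in>UNIV. \<Sum>k\<in>UNIV. G$i$k * (Q.v k * Q.v i))"
  define c where "c = trace (mabs (msqrt G ** Fm ** msqrt G))"
  have Cb: "Cbound b \<rho> dr G = t0 - b^2 * q + b * c" if b: "0 \<le> b" "b \<le> 1" for b
  proof -
    have 1: "Re (trace (map_matrix complex_of_real G ** matrix_inv (Jmat b \<rho> dr))) = t0 - b^2 * q"
      using b by (simp add: inv re_trace ReK t0_def q_def right_diff_distrib sum_subtractf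
          sum_distrib_left mult_ac)
    have "msqrt G ** Im_mat (matrix_inv (Jmat b \<rho> dr)) ** msqrt G = b *\<^sub>R (msqrt G ** Fm ** msqrt G)"
      using b by (simp add: inv ImK mm_scaleR_l mm_scaleR_r)
    then have 2: "trace (mabs (msqrt G ** Im_mat (matrix_inv (Jmat b \<rho> dr)) ** msqrt G)) = b * c"
      using b by (simp add: mabs_scale trace_scaleR c_def)
    show ?thesis unfolding Cbound_def 1 2 ..
  qed
  have JS: "matrix_inv (Jmat 0 \<rho> dr) = Q.Kmat 0" using inv by simp
  have JR: "matrix_inv (Jmat 1 \<rho> dr) = Q.Kmat 1" using inv by simp
  have diff: "matrix_inv (Jmat 0 \<rho> dr) - map_matrix complex_of_real (Re_mat (matrix_inv (Jmat 1 \<rho> dr)))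
      = map_matrix complex_of_real (\<chi> m j. Q.v m * Q.v j)"
    by (simp add: JS JR Re_mat_def Q.Kmat_def vec_eq_iff)
  have qeq: "Re (trace (map_matrix complex_of_real G ** (matrix_inv (Jmat 0 \<rho> dr)
      - map_matrix complex_of_real (Re_mat (matrix_inv (Jmat 1 \<rho> dr)))))) = q"
    unfolding diff by (simp add: re_trace q_def)
  have ImR: "Im_mat (matrix_inv (Jmat 1 \<rho> dr)) = Fm" by (simp add: JR ImK)
  have qv: "q = vv \<bullet> (G *v vv)"
    by (simp add: q_def vv_def inner_vec_def matrix_vector_mult_def sum_distrib_left mult_ac)
  have Pq: "(matrix_inv (Jmat 0 \<rho> dr) \<noteq> map_matrix complex_of_real (Re_mat (matrix_inv (Jmat 1 \<rho> dr))))
      \<longleftrightarrow> 0 < q"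
  proof (cases "vv = 0")
    case True
    then have "\<And>k. Q.v k = 0" by (simp add: vv_def vec_eq_iff)
    then show ?thesis using diff by (simp add: q_def vec_eq_iff)
  next
    case False
    then have qp: "0 < q" using assms(8) qv by (simp add: rposdef_def)
    obtain k where "Q.v k \<noteq> 0" using False by (auto simp: vv_def vec_eq_iff)
    then have "map_matrix complex_of_real (\<chi> m j. Q.v m * Q.v j) \<noteq> (0::complex^'d^'d)"
      by (auto simp: vec_eq_iff intro!: exI[of _ k])
    then show ?thesis using qp by (metis diff right_minus_eq)
  qed
  have q0: "0 \<le> q"
  proof (cases "vv = 0")
    case True then show ?thesis by (simp add: qv)
  next
    case False then show ?thesis using assms(8) qv by (simp add: rposdef_def less_imp_le)
  qed
  have c0: "0 \<le> c" unfolding c_def by (rule trace_mabs_nonneg)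
  have bh: "trace (mabs (msqrt G ** Im_mat (matrix_inv (Jmat 1 \<rho> dr)) ** msqrt G))
      / (2 * Re (trace (map_matrix complex_of_real G ** (matrix_inv (Jmat 0 \<rho> dr)
      - map_matrix complex_of_real (Re_mat (matrix_inv (Jmat 1 \<rho> dr))))))) = c / (2 * q)"
    by (simp only: ImR qeq c_def)
  show ?thesis
    unfolding Let_def \<rho>_def[symmetric] dr_def[symmetric]
    by (rule final_real[of "\<lambda>\<beta>. Cbound \<beta> \<rho> dr G" t0 q c, OF Cb c0 q0 Pq bh])
qed

end
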